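(* Let $(U_n)_{n\ge0}$ be a linear recurrence sequence of order $k\ge2$ with integer coefficients having a dominant root $\alpha_1$ (i.e. $|\alpha_1|>|\alpha_j|$ for all other roots $\alpha_j$ of its characteristic polynomial). Let $a,b$ be positive integers, $r\ge1$ and $\varepsilon>0$. Let $(n,m,z_1,\dots,z_r)$ with integers $n\ge m\ge 0$, $n\ge1$, and $z_1,\dots,z_r\in\mathcal U_S$, $z_r\neq0$, be a solution of $aU_n+bU_m=z_1+\cdots+z_r$ such that $|z_i|^{1+\varepsilon}\le |z_r|$ for $1\le i\le r-1$. Then $$\log|z_r|<c_7 n+c_8,$$ where $c_7,c_8$ are effectively computable constants depending only on $\varepsilon,\gamma,r,k,a,b$.
   Context: A linear recurrence sequence of order $k$ is defined by $U_n=a_1U_{n-1}+\cdots+a_kU_{n-k}$ with $a_1,\dots,a_k\in\mathbb Z$, $a_k\ne0$, and integer initial values $U_0,\dots,U_{k-1}$ not all zero; its characteristic polynomial is $x^k-a_1x^{k-1}-\cdots-a_k$. Set $\gamma:=\max\{\max_{1\le i\le k}|a_i|,\max_{0\le j\le k-1}|U_j|\}$. Let $S=\{p_1,\dots,p_\ell\}$ be a finite set of distinct primes and $\mathcal U_S$ the set of integers of the form $\pm p_1^{e_1}\cdots p_\ell^{e_\ell}$ with nonnegative integers $e_i$. *)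

theory Defs
  imports "HOL-Computational_Algebra.Computational_Algebra" "HOL-Computational_Algebra.Primes" Complex_Main
begin

definition is_lrs :: "nat \<Rightarrow> (nat \<Rightarrow> int) \<Rightarrow> (nat \<Rightarrow> int) \<Rightarrow> bool" where
  "is_lrs k cf U \<longleftrightarrow> cf k \<noteq> 0 \<and> (\<exists>j<k. U j \<noteq> 0) \<and>
     (\<forall>n\<ge>k. U n = (\<Sum>i=1..k. cf i * U (n - i)))"

definition char_poly :: "nat \<Rightarrow> (nat \<Rightarrow> int) \<Rightarrow> int poly" where
  "char_poly k cf = monom 1 k - (\<Sum>i=1..k. monom (cf i) (k - i))"

definition has_dominant_root :: "nat \<Rightarrow> (nat \<Rightarrow> int) \<Rightarrow> bool" where
  "has_dominant_root k cf \<longleftrightarrow>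
     (\<exists>\<alpha>1::complex. poly (map_poly of_int (char_poly k cf)) \<alpha>1 = 0 \<and>
        (\<forall>\<beta>. poly (map_poly of_int (char_poly k cf)) \<beta> = 0 \<and> \<beta> \<noteq> \<alpha>1 \<longrightarrow> cmod \<beta> < cmod \<alpha>1))"

definition lrs_gamma :: "nat \<Rightarrow> (nat \<Rightarrow> int) \<Rightarrow> (nat \<Rightarrow> int) \<Rightarrow> int" where
  "lrs_gamma k cf U = max (Max ((\<lambda>i. \<bar>cf i\<bar>) ` {1..k})) (Max ((\<lambda>j. \<bar>U j\<bar>) ` {..<k}))"

definition S_units :: "nat set \<Rightarrow> int set" where
  "S_units S = {z. \<exists>e::nat \<Rightarrow> nat. z = (\<Prod>p\<in>S. int p ^ e p) \<or> z = - (\<Prod>p\<in>S. int p ^ e p)}"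

end

theory Submission
  imports Defs
begin

lemma U_bound:
  fixes G :: int
  assumes lrs: "is_lrs k cf U" and cfb: "\<forall>i\<in>{1..k}. \<bar>cf i\<bar> \<le> G"
    and Ub: "\<forall>j<k. \<bar>U j\<bar> \<le> G" and G1: "G \<ge> 1" and k1: "k \<ge> 1"
  shows "\<bar>U n\<bar> \<le> G * (int k * G + 1) ^ n"
proof (induction n rule: less_induct)
  case (less n)
  define B where "B = int k * G + 1"
  have B1: "B \<ge> 1" using G1 unfolding B_def by simp
  show ?case
  proof (cases "n < k")
    case True
    have "\<bar>U n\<bar> \<le> G" using Ub True by auto
    also have "G \<le> G * B ^ n" using G1 B1 by (simp add: one_le_power)
    finally show ?thesis unfolding B_def .
  next
    case False
    hence nk: "n \<ge> k" by simp
    have "U n = (\<Sum>i=1..k. cf i * U (n - i))" using lrs nk unfolding is_lrs_def by auto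
    hence "\<bar>U n\<bar> \<le> (\<Sum>i=1..k. \<bar>cf i * U (n - i)\<bar>)" by (simp add: sum_abs)
    also have "\<dots> \<le> (\<Sum>i=1..k. G * (G * B ^ (n - 1)))"
    proof (rule sum_mono)
      fix i assume i: "i \<in> {1..k}"
      have "\<bar>U (n - i)\<bar> \<le> G * B ^ (n - i)" using less[of "n - i"] i nk unfolding B_def by auto
      also have "\<dots> \<le> G * B ^ (n - 1)" using B1 G1 i by (intro mult_left_mono power_increasing) auto
      finally have u: "\<bar>U (n - i)\<bar> \<le> G * B ^ (n - 1)" .
      have "\<bar>cf i * U (n - i)\<bar> = \<bar>cf i\<bar> * \<bar>U (n - i)\<bar>" by (simp add: abs_mult)
      also have "\<dots> \<le> G * (G * B ^ (n - 1))" using cfb i u by (intro mult_mono) auto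
      finally show "\<bar>cf i * U (n - i)\<bar> \<le> G * (G * B ^ (n - 1))" .
    qed
    also have "\<dots> = (int k * G) * (G * B ^ (n - 1))" by simp
    also have "\<dots> \<le> B * (G * B ^ (n - 1))" using G1 B1 unfolding B_def by (intro mult_right_mono) auto
    also have "\<dots> = G * B ^ n" using nk k1
      by (metis Suc_diff_le diff_Suc_1 le_trans mult.left_commute power_Suc Suc_le_eq less_eq_Suc_le)
    finally show ?thesis unfolding B_def .
  qed
qed

theorem lemma3:
  fixes \<epsilon> :: real and \<gamma> :: int and r k :: nat and a b :: int
  assumes "\<epsilon> > 0" and "r \<ge> 1" and "k \<ge> 2" and "a > 0" and "b > 0"
  shows "\<exists>c7 c8 :: real. \<forall>(cf :: nat \<Rightarrow> int) (U :: nat \<Rightarrow> int) (S :: nat set)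
            (n :: nat) (m :: nat) (z :: nat \<Rightarrow> int).
     is_lrs k cf U \<and> has_dominant_root k cf \<and> lrs_gamma k cf U = \<gamma> \<and>
     finite S \<and> (\<forall>p\<in>S. prime p) \<and>
     n \<ge> m \<and> n \<ge> 1 \<and> (\<forall>i\<in>{1..r}. z i \<in> S_units S) \<and> z r \<noteq> 0 \<and>
     a * U n + b * U m = (\<Sum>i=1..r. z i) \<and>
     (\<forall>i\<in>{1..r-1}. real_of_int \<bar>z i\<bar> powr (1 + \<epsilon>) \<le> real_of_int \<bar>z r\<bar>)
     \<longrightarrow> ln (real_of_int \<bar>z r\<bar>) < c7 * real n + c8"
proof -
  define G :: int where "G = max \<gamma> 1"
  define B :: int where "B = int k * G + 1"
  define \<delta> :: real where "\<delta> = 1 / (1 + \<epsilon>)"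
  define K :: real where "K = (2 * (real r - 1)) powr (1 / (1 - \<delta>))"
  define C :: real where "C = 2 * real_of_int ((a + b) * G)"
  have G1: "G \<ge> 1" unfolding G_def by simp
  have B1: "B \<ge> 1" using G1 unfolding B_def by simp
  have d0: "\<delta> > 0" and d1: "\<delta> < 1" using assms(1) unfolding \<delta>_def by auto
  have K0: "K \<ge> 0" unfolding K_def by simp
  have C2: "C \<ge> 2" unfolding C_def using assms(4,5) G1
    by (smt (verit) mult_le_cancel_left1 of_int_le_1_iff of_int_mult)
  show ?thesis
  proof (intro exI allI impI)
    fix cf U S n m z
    assume H: "is_lrs k cf U \<and> has_dominant_root k cf \<and> lrs_gamma k cf U = \<gamma> \<and>
     finite S \<and> (\<forall>p\<in>S. prime p) \<and>
     n \<ge> m \<and> n \<ge> 1 \<and> (\<forall>i\<in>{1..r}. z i \<in> S_units S) \<and> z r \<noteq> 0 \<and>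
     a * U n + b * U m = (\<Sum>i=1..r. z i) \<and>
     (\<forall>i\<in>{1..r-1}. real_of_int \<bar>z i\<bar> powr (1 + \<epsilon>) \<le> real_of_int \<bar>z r\<bar>)"
    have lrs: "is_lrs k cf U" using H by blast
    have cfb: "\<forall>i\<in>{1..k}. \<bar>cf i\<bar> \<le> G"
    proof
      fix i assume "i \<in> {1..k}"
      hence "\<bar>cf i\<bar> \<le> Max ((\<lambda>i. \<bar>cf i\<bar>) ` {1..k})" by (intro Max_ge) auto
      thus "\<bar>cf i\<bar> \<le> G" using H unfolding G_def lrs_gamma_def by linarith
    qed
    have Ub: "\<forall>j<k. \<bar>U j\<bar> \<le> G"
    proof (intro allI impI)
      fix j assume "j < k"
      hence "\<bar>U j\<bar> \<le> Max ((\<lambda>j. \<bar>U j\<bar>) ` {..<k})" by (intro Max_ge) auto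
      thus "\<bar>U j\<bar> \<le> G" using H unfolding G_def lrs_gamma_def by linarith
    qed
    have k1: "k \<ge> 1" using assms(3) by simp
    have nm: "m \<le> n" using H by blast
    have Un: "\<bar>U n\<bar> \<le> G * B ^ n" using U_bound[OF lrs cfb Ub G1 k1] unfolding B_def .
    have Um: "\<bar>U m\<bar> \<le> G * B ^ n"
    proof -
      have "\<bar>U m\<bar> \<le> G * B ^ m" using U_bound[OF lrs cfb Ub G1 k1] unfolding B_def .
      also have "\<dots> \<le> G * B ^ n" using G1 B1 nm by (intro mult_left_mono power_increasing) auto
      finally show ?thesis .
    qed
    have lhs: "\<bar>a * U n + b * U m\<bar> \<le> (a + b) * G * B ^ n"
    proof -
      have "\<bar>a * U n + b * U m\<bar> \<le> a * \<bar>U n\<bar> + b * \<bar>U m\<bar>"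
        using assms(4,5) by (simp add: abs_mult abs_triangle_ineq[THEN order_trans])
      also have "\<dots> \<le> a * (G * B ^ n) + b * (G * B ^ n)"
        using assms(4,5) Un Um by (intro add_mono mult_left_mono) auto
      finally show ?thesis by (simp add: algebra_simps)
    qed
    define M where "M = real_of_int \<bar>z r\<bar>"
    have zr: "z r \<noteq> 0" using H by blast
    hence "\<bar>z r\<bar> \<ge> 1" by linarith
    hence M1: "M \<ge> 1" unfolding M_def by (metis of_int_1_le_iff)
    have zi: "real_of_int \<bar>z i\<bar> \<le> M powr \<delta>" if i: "i \<in> {1..r-1}" for i
    proof (cases "z i = 0")
      case True thus ?thesis by simp
    next
      case False
      have h: "real_of_int \<bar>z i\<bar> powr (1 + \<epsilon>) \<le> M" using H i unfolding M_def by blast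
      have "real_of_int \<bar>z i\<bar> = (real_of_int \<bar>z i\<bar> powr (1 + \<epsilon>)) powr \<delta>"
        using assms(1) False unfolding \<delta>_def by (simp add: powr_powr)
      also have "\<dots> \<le> M powr \<delta>" using h d0 by (intro powr_mono2) auto
      finally show ?thesis .
    qed
    have sumeq: "(\<Sum>i=1..r. z i) = (\<Sum>i=1..r-1. z i) + z r"
      proof -
      obtain q where q: "r = Suc q" using assms(2) by (cases r) auto
      show ?thesis unfolding q by (simp add: sum.cl_ivl_Suc add.commute)
    qed
    have "M \<le> real_of_int \<bar>\<Sum>i=1..r. z i\<bar> + real_of_int \<bar>\<Sum>i=1..r-1. z i\<bar>"
      unfolding M_def sumeq by linarith
    also have "real_of_int \<bar>\<Sum>i=1..r-1. z i\<bar> \<le> (\<Sum>i=1..r-1. real_of_int \<bar>z i\<bar>)"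
      by (metis of_int_le_iff of_int_sum sum_abs)
    also have "\<dots> \<le> (\<Sum>i=1..r-1. M powr \<delta>)" using zi by (intro sum_mono) auto
    also have "\<dots> = (real r - 1) * M powr \<delta>" using assms(2) by (simp add: of_nat_diff)
    finally have main0: "M \<le> real_of_int \<bar>\<Sum>i=1..r. z i\<bar> + (real r - 1) * M powr \<delta>" by simp
    have eqs: "(\<Sum>i=1..r. z i) = a * U n + b * U m" using H by simp
    have "real_of_int \<bar>\<Sum>i=1..r. z i\<bar> \<le> real_of_int ((a + b) * G * B ^ n)"
      unfolding eqs using lhs by (simp only: of_int_le_iff)
    hence main: "M \<le> real_of_int ((a + b) * G * B ^ n) + (real r - 1) * M powr \<delta>"
      using main0 by linarith
    have lnB: "ln (real_of_int B) \<ge> 0" using B1 by simp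
    have lnC: "ln C \<ge> 0" using C2 by simp
    have lnK: "ln (K + 1) \<ge> 0" using K0 by simp
    show "ln (real_of_int \<bar>z r\<bar>) < ln (real_of_int B) * real n + (ln C + ln (K + 1) + 1)"
    proof (cases "(real r - 1) * M powr \<delta> \<le> M / 2")
      case True
      hence "M \<le> C * real_of_int B ^ n" using main unfolding C_def by simp
      hence "ln M \<le> ln (C * real_of_int B ^ n)" using M1 by simp
      also have "\<dots> = ln C + real n * ln (real_of_int B)" using C2 B1 by (simp add: ln_mult ln_realpow)
      finally show ?thesis unfolding M_def using lnK by (simp add: mult.commute)
    next
      case False
      hence lt: "M < 2 * (real r - 1) * M powr \<delta>" by (simp add: algebra_simps)
      have Mp: "M powr \<delta> > 0" using M1 by simp
      have "M powr (1 - \<delta>) = M / M powr \<delta>" using M1 by (simp add: powr_diff)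
      also have "\<dots> < 2 * (real r - 1)" using lt Mp by (simp add: divide_less_eq)
      finally have lt2: "M powr (1 - \<delta>) < 2 * (real r - 1)" .
      have "M = (M powr (1 - \<delta>)) powr (1 / (1 - \<delta>))" using M1 d1 by (simp add: powr_powr)
      also have "\<dots> < K" unfolding K_def using lt2 d1 M1
        by (intro powr_less_mono2) auto
      finally have "M < K" .
      hence "ln M < ln (K + 1)" using M1 by simp
      moreover have "ln (real_of_int B) * real n \<ge> 0" using lnB by simp
      ultimately show ?thesis unfolding M_def using lnC by linarith
    qed
  qed
qed

end
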